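(* Let $G$ be a multiplicative monoid with identity, let $N$ be a $G$-graded near-ring, and let $P$ be a graded weakly prime ideal of $N$. If $P$ is not a graded prime ideal of $N$, then $P^2 \cap N = \{0\}$.
   Context: A near-ring $(N,+,\cdot)$ is a set with two binary operations such that $(N,+)$ is a group (not necessarily abelian), $(N,\cdot)$ is a semigroup, and $(a+b)y = ay+by$ for all $a,b,y\in N$. For a multiplicative monoid $G$ with identity, $N$ is a $G$-graded near-ring if there is a family $\{N_\sigma\}_{\sigma\in G}$ of additive normal subgroups of $N$ with $N=\bigoplus_{\sigma\in G}N_\sigma$ and $N_\sigma N_\tau\subseteq N_{\sigma\tau}$ for all $\sigma,\tau\in G$. An ideal $P$ of $N$ is graded if $P=\bigoplus_{\sigma\in G}(P\cap N_\sigma)$. For ideals $I,J$, $IJ$ denotes their product, and $P^2=PP$ (the paper writes $P^2\cap N$). A graded ideal $P$ is graded prime if for all graded ideals $I,J$ of $N$ with $IJ\subseteq P$, either $I\subseteq P$ or $J\subseteq P$. A graded ideal $P$ is graded weakly prime if for all graded ideals $I,J$ of $N$ with $\{0\}\neq IJ\subseteq P$, either $I\subseteq P$ or $J\subseteq P$. *)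

theory Defs
  imports Main
begin

text \<open>A (right) near-ring: (N,+) a group (not necessarily abelian), (N,*) a semigroup,
  and (a+b)y = ay + by.  The whole type is the near-ring N.\<close>
class near_ring = group_add + semigroup_mult +
  assumes near_ring_distrib_right: "(a + b) * y = a * y + b * y"

definition normal_addsubgroup :: "'a::group_add set \<Rightarrow> bool" where
  "normal_addsubgroup H \<longleftrightarrow> 0 \<in> H \<and> (\<forall>x\<in>H. \<forall>y\<in>H. x + y \<in> H) \<and> (\<forall>x\<in>H. - x \<in> H)
     \<and> (\<forall>g. \<forall>h\<in>H. g + h - g \<in> H)"

definition addsubgroup :: "'a::group_add set \<Rightarrow> bool" where
  "addsubgroup H \<longleftrightarrow> 0 \<in> H \<and> (\<forall>x\<in>H. \<forall>y\<in>H. x + y \<in> H) \<and> (\<forall>x\<in>H. - x \<in> H)"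

definition addsubgroup_gen :: "'a::group_add set \<Rightarrow> 'a set" where
  "addsubgroup_gen S = \<Inter> {H. addsubgroup H \<and> S \<subseteq> H}"

text \<open>Internal direct sum: the family of normal subgroups generates the whole group and each
  component meets the subgroup generated by the other components trivially.\<close>
definition graded_near_ring :: "('g::monoid_mult \<Rightarrow> 'a::near_ring set) \<Rightarrow> bool" where
  "graded_near_ring Ns \<longleftrightarrow>
     (\<forall>\<sigma>. normal_addsubgroup (Ns \<sigma>))
     \<and> addsubgroup_gen (\<Union>\<sigma>. Ns \<sigma>) = UNIV
     \<and> (\<forall>\<sigma>. Ns \<sigma> \<inter> addsubgroup_gen (\<Union>\<tau>\<in>{\<tau>. \<tau> \<noteq> \<sigma>}. Ns \<tau>) = {0})
     \<and> (\<forall>\<sigma> \<tau>. \<forall>x\<in>Ns \<sigma>. \<forall>y\<in>Ns \<tau>. x * y \<in> Ns (\<sigma> * \<tau>))"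

definition nr_ideal :: "'a::near_ring set \<Rightarrow> bool" where
  "nr_ideal I \<longleftrightarrow> normal_addsubgroup I
     \<and> (\<forall>i\<in>I. \<forall>n. i * n \<in> I)
     \<and> (\<forall>n m. \<forall>i\<in>I. n * (m + i) - n * m \<in> I)"

text \<open>Product of ideals: the set of products (equivalent for the notions used).\<close>
definition ideal_prod :: "'a::near_ring set \<Rightarrow> 'a set \<Rightarrow> 'a set" where
  "ideal_prod I J = {i * j | i j. i \<in> I \<and> j \<in> J}"

definition graded_ideal :: "('g::monoid_mult \<Rightarrow> 'a::near_ring set) \<Rightarrow> 'a set \<Rightarrow> bool" where
  "graded_ideal Ns P \<longleftrightarrow> nr_ideal P \<and> P = addsubgroup_gen (\<Union>\<sigma>. P \<inter> Ns \<sigma>)"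

definition graded_prime :: "('g::monoid_mult \<Rightarrow> 'a::near_ring set) \<Rightarrow> 'a set \<Rightarrow> bool" where
  "graded_prime Ns P \<longleftrightarrow> graded_ideal Ns P \<and>
     (\<forall>I J. graded_ideal Ns I \<longrightarrow> graded_ideal Ns J \<longrightarrow> ideal_prod I J \<subseteq> P
        \<longrightarrow> I \<subseteq> P \<or> J \<subseteq> P)"

definition graded_weakly_prime :: "('g::monoid_mult \<Rightarrow> 'a::near_ring set) \<Rightarrow> 'a set \<Rightarrow> bool" where
  "graded_weakly_prime Ns P \<longleftrightarrow> graded_ideal Ns P \<and>
     (\<forall>I J. graded_ideal Ns I \<longrightarrow> graded_ideal Ns J \<longrightarrow>
        ideal_prod I J \<noteq> {0} \<longrightarrow> ideal_prod I J \<subseteq> P \<longrightarrow> I \<subseteq> P \<or> J \<subseteq> P)"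

end

theory Submission
  imports Defs
begin

lemma gen_sub: "addsubgroup (addsubgroup_gen S)" "S \<subseteq> addsubgroup_gen S"
  unfolding addsubgroup_gen_def addsubgroup_def by blast+

lemma gen_least: "addsubgroup H \<Longrightarrow> S \<subseteq> H \<Longrightarrow> addsubgroup_gen S \<subseteq> H"
  unfolding addsubgroup_gen_def by blast

lemma gen_mono: "S \<subseteq> T \<Longrightarrow> addsubgroup_gen S \<subseteq> addsubgroup_gen T"
  unfolding addsubgroup_gen_def by blast

definition ssum :: "'a::near_ring set \<Rightarrow> 'a set \<Rightarrow> 'a set" where
  "ssum I P = {i + p | i p. i \<in> I \<and> p \<in> P}"

lemma conj_mem: "normal_addsubgroup P \<Longrightarrow> p \<in> P \<Longrightarrow> - g + p + g \<in> P"
  unfolding normal_addsubgroup_def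
  by (metis diff_minus_eq_add minus_minus)

lemma ssum_swap:
  assumes "normal_addsubgroup P" "x \<in> P" "y \<in> I"
  shows "x + y \<in> ssum I P"
proof -
  have "x + y = y + (- y + x + y)" by (simp add: add.assoc[symmetric])
  moreover have "- y + x + y \<in> P" using conj_mem[OF assms(1,2)] .
  ultimately show ?thesis unfolding ssum_def using assms(3) by blast
qed

lemma ssum_ideal:
  assumes I: "nr_ideal I" and P: "nr_ideal P"
  shows "nr_ideal (ssum I P)"
proof -
  have nI: "normal_addsubgroup I" and nP: "normal_addsubgroup P"
    using I P unfolding nr_ideal_def by auto
  have I0: "0 \<in> I" "\<And>x y. x \<in> I \<Longrightarrow> y \<in> I \<Longrightarrow> x + y \<in> I" "\<And>x. x \<in> I \<Longrightarrow> - x \<in> I"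
    "\<And>g x. x \<in> I \<Longrightarrow> g + x - g \<in> I"
    using nI unfolding normal_addsubgroup_def by auto
  have P0: "0 \<in> P" "\<And>x y. x \<in> P \<Longrightarrow> y \<in> P \<Longrightarrow> x + y \<in> P" "\<And>x. x \<in> P \<Longrightarrow> - x \<in> P"
    "\<And>g x. x \<in> P \<Longrightarrow> g + x - g \<in> P"
    using nP unfolding normal_addsubgroup_def by auto
  have "0 \<in> ssum I P" unfolding ssum_def using I0 P0 by force
  moreover have "\<forall>x\<in>ssum I P. \<forall>y\<in>ssum I P. x + y \<in> ssum I P"
  proof (intro ballI)
    fix x y assume "x \<in> ssum I P" "y \<in> ssum I P"
    then obtain i p i' p' where h: "x = i + p" "y = i' + p'" "i \<in> I" "p \<in> P" "i' \<in> I" "p' \<in> P"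
      unfolding ssum_def by blast
    have "x + y = (i + i') + ((- i' + p + i') + p')" using h by (simp add: add.assoc)
    moreover have "- i' + p + i' \<in> P" using conj_mem[OF nP h(4)] .
    ultimately show "x + y \<in> ssum I P" unfolding ssum_def using h I0 P0 by blast
  qed
  moreover have "\<forall>x\<in>ssum I P. - x \<in> ssum I P"
  proof
    fix x assume "x \<in> ssum I P"
    then obtain i p where h: "x = i + p" "i \<in> I" "p \<in> P" unfolding ssum_def by blast
    have "- x = - p + - i" using h by (simp add: minus_add)
    also have "\<dots> = - i + (i + - p + - i)" by (simp only: add.assoc minus_add_cancel)
    finally have "- x = - i + (i + - p - i)" by (simp only: diff_conv_add_uminus)
    moreover have "i + - p - i \<in> P" using P0 h by blast
    ultimately show "- x \<in> ssum I P" unfolding ssum_def using h I0 by blast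
  qed
  moreover have "\<forall>g. \<forall>x\<in>ssum I P. g + x - g \<in> ssum I P"
  proof (intro allI ballI)
    fix g x assume "x \<in> ssum I P"
    then obtain i p where h: "x = i + p" "i \<in> I" "p \<in> P" unfolding ssum_def by blast
    have "g + x - g = (g + i - g) + (g + p - g)" using h by (simp only: h diff_conv_add_uminus add.assoc minus_add_cancel)
    then show "g + x - g \<in> ssum I P" unfolding ssum_def using h I0 P0 by blast
  qed
  moreover have "\<forall>x\<in>ssum I P. \<forall>n. x * n \<in> ssum I P"
  proof (intro allI ballI)
    fix n x assume "x \<in> ssum I P"
    then obtain i p where h: "x = i + p" "i \<in> I" "p \<in> P" unfolding ssum_def by blast
    have "x * n = i * n + p * n" using h by (simp add: near_ring_distrib_right)
    then show "x * n \<in> ssum I P" unfolding ssum_def using h I P unfolding nr_ideal_def by blast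
  qed
  moreover have "\<forall>n m. \<forall>x\<in>ssum I P. n * (m + x) - n * m \<in> ssum I P"
  proof (intro allI ballI)
    fix n m x assume "x \<in> ssum I P"
    then obtain i p where h: "x = i + p" "i \<in> I" "p \<in> P" unfolding ssum_def by blast
    have e: "n * (m + x) - n * m = (n * ((m + i) + p) - n * (m + i)) + (n * (m + i) - n * m)"
      using h by (simp only: h diff_conv_add_uminus add.assoc minus_add_cancel)
    have "n * ((m + i) + p) - n * (m + i) \<in> P" using P h unfolding nr_ideal_def by blast
    moreover have "n * (m + i) - n * m \<in> I" using I h unfolding nr_ideal_def by blast
    ultimately show "n * (m + x) - n * m \<in> ssum I P" using e ssum_swap[OF nP] by metis
  qed
  ultimately show ?thesis unfolding nr_ideal_def normal_addsubgroup_def by blast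
qed

lemma ssum_graded:
  assumes I: "graded_ideal Ns I" and P: "graded_ideal Ns P"
  shows "graded_ideal Ns (ssum I P)"
proof -
  have nI: "nr_ideal I" and nP: "nr_ideal P" using I P unfolding graded_ideal_def by auto
  have S: "nr_ideal (ssum I P)" using ssum_ideal[OF nI nP] .
  have I0: "0 \<in> I" and P0: "0 \<in> P"
    using nI nP unfolding nr_ideal_def normal_addsubgroup_def by auto
  have IS: "I \<subseteq> ssum I P" unfolding ssum_def using P0 by force
  have PS: "P \<subseteq> ssum I P" unfolding ssum_def using I0 by force
  let ?G = "addsubgroup_gen (\<Union>\<sigma>. ssum I P \<inter> Ns \<sigma>)"
  have "?G \<subseteq> ssum I P"
    by (rule gen_least) (use S in \<open>auto simp: nr_ideal_def normal_addsubgroup_def addsubgroup_def\<close>)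
  moreover have "ssum I P \<subseteq> ?G"
  proof
    fix x assume "x \<in> ssum I P"
    then obtain i p where h: "x = i + p" "i \<in> I" "p \<in> P" unfolding ssum_def by blast
    have "I \<subseteq> ?G"
    proof -
      have "I = addsubgroup_gen (\<Union>\<sigma>. I \<inter> Ns \<sigma>)" using I unfolding graded_ideal_def by blast
      also have "\<dots> \<subseteq> ?G" by (rule gen_mono) (use IS in blast)
      finally show ?thesis .
    qed
    moreover have "P \<subseteq> ?G"
    proof -
      have "P = addsubgroup_gen (\<Union>\<sigma>. P \<inter> Ns \<sigma>)" using P unfolding graded_ideal_def by blast
      also have "\<dots> \<subseteq> ?G" by (rule gen_mono) (use PS in blast)
      finally show ?thesis .
    qed
    ultimately show "x \<in> ?G" using h gen_sub(1) unfolding addsubgroup_def by blast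
  qed
  ultimately show ?thesis unfolding graded_ideal_def using S by blast
qed

lemma prod_in:
  assumes P: "nr_ideal P" and IJ: "ideal_prod I J \<subseteq> P"
  shows "ideal_prod (ssum I P) (ssum J P) \<subseteq> P"
proof
  fix x assume "x \<in> ideal_prod (ssum I P) (ssum J P)"
  then obtain i p j q where h: "x = (i + p) * (j + q)" "i \<in> I" "p \<in> P" "j \<in> J" "q \<in> P"
    unfolding ideal_prod_def ssum_def by blast
  have P0: "\<And>x y. x \<in> P \<Longrightarrow> y \<in> P \<Longrightarrow> x + y \<in> P"
    using P unfolding nr_ideal_def normal_addsubgroup_def by auto
  have a: "i * (j + q) - i * j \<in> P" using P h unfolding nr_ideal_def by blast
  have b: "i * j \<in> P" using IJ h unfolding ideal_prod_def by blast
  have c: "p * (j + q) \<in> P" using P h unfolding nr_ideal_def by blast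
  have "x = ((i * (j + q) - i * j) + i * j) + p * (j + q)"
    using h by (simp add: near_ring_distrib_right)
  then show "x \<in> P" using a b c P0 by metis
qed

theorem theorem1:
  fixes Ns :: "'g::monoid_mult \<Rightarrow> 'a::near_ring set" and P :: "'a set"
  assumes "graded_near_ring Ns"
    and "graded_weakly_prime Ns P"
    and "\<not> graded_prime Ns P"
  shows "ideal_prod P P = {0}"
proof (rule ccontr)
  assume ne: "ideal_prod P P \<noteq> {0}"
  have GP: "graded_ideal Ns P" using assms(2) unfolding graded_weakly_prime_def by blast
  have nP: "nr_ideal P" using GP unfolding graded_ideal_def by blast
  have P0: "0 \<in> P" using nP unfolding nr_ideal_def normal_addsubgroup_def by auto
  have "graded_prime Ns P" unfolding graded_prime_def
  proof (intro conjI GP allI impI)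
    fix I J assume gI: "graded_ideal Ns I" and gJ: "graded_ideal Ns J" and IJ: "ideal_prod I J \<subseteq> P"
    show "I \<subseteq> P \<or> J \<subseteq> P"
    proof (cases "ideal_prod I J = {0}")
      case False
      then show ?thesis using assms(2) gI gJ IJ unfolding graded_weakly_prime_def by blast
    next
      case True
      have I0: "0 \<in> I" and J0: "0 \<in> J"
        using gI gJ unfolding graded_ideal_def nr_ideal_def normal_addsubgroup_def by auto
      have IS: "I \<subseteq> ssum I P" unfolding ssum_def using P0 by force
      have JS: "J \<subseteq> ssum J P" unfolding ssum_def using P0 by force
      have sub: "ideal_prod (ssum I P) (ssum J P) \<subseteq> P" using prod_in[OF nP IJ] .
      have PP: "ideal_prod P P \<subseteq> ideal_prod (ssum I P) (ssum J P)"
        unfolding ideal_prod_def ssum_def using I0 J0 by force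
      have PPne: "ideal_prod P P \<noteq> {}" unfolding ideal_prod_def using P0 by blast
      have "ideal_prod (ssum I P) (ssum J P) \<noteq> {0}"
      proof
        assume "ideal_prod (ssum I P) (ssum J P) = {0}"
        then have "ideal_prod P P \<subseteq> {0}" using PP by simp
        then show False using PPne ne by (simp add: subset_singleton_iff)
      qed
      then have "ssum I P \<subseteq> P \<or> ssum J P \<subseteq> P"
        using assms(2) ssum_graded[OF gI GP] ssum_graded[OF gJ GP] sub
        unfolding graded_weakly_prime_def by blast
      then show ?thesis using IS JS by blast
    qed
  qed
  then show False using assms(3) by blast
qed

end
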